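(* Identify $\mathbb{R}^2$ with $\mathbb{C}$. Let $x,y\in\mathbb{B}^2$ and put $\xi=\frac{x+y}{|x+y|}$ if $x+y\ne0$ and $\xi=e_1=1$ if $x+y=0$; put $\zeta=i\xi$. Define $$x'=\tfrac{x+y}{2}-\tfrac{|x-y|}{2}\xi,\quad y'=\tfrac{x+y}{2}+\tfrac{|x-y|}{2}\xi,\quad x''=\tfrac{x+y}{2}-\tfrac{|x-y|}{2}\zeta,\quad y''=\tfrac{x+y}{2}+\tfrac{|x-y|}{2}\zeta,$$ and assume $x',y'\in\mathbb{B}^2$. Then $x'',y''\in\mathbb{B}^2$ and $$\tilde\tau_{\mathbb{B}^2}(x'',y'')\le\tilde\tau_{\mathbb{B}^2}(x,y)\le\tilde\tau_{\mathbb{B}^2}(x',y').$$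
   Context: $\mathbb{B}^2$ is the open unit disk. For a proper subdomain $D\subsetneq\mathbb{R}^n$ and $x,y\in D$, $\tilde\tau_D(x,y)=\log\big(1+\sup_{p\in\partial D}\frac{|x-y|}{\sqrt{|x-p||y-p|}}\big)$ (the scale invariant Cassinian metric). *)

theory Defs
  imports "HOL-Analysis.Analysis"
begin

definition sic_metric :: "complex set \<Rightarrow> complex \<Rightarrow> complex \<Rightarrow> real" where
  "sic_metric D x y =
     ln (1 + (SUP p\<in>frontier D. cmod (x - y) / sqrt (cmod (x - p) * cmod (y - p))))"

end

theory Submission
  imports Defs
begin
lemma key_ineq:
  fixes X Y a b t :: real
  assumes "a \<ge> 0" "a^2 + b^2 = 1" "X > t*a" "X^2 + Y^2 \<le> t^2" "t > 0"
  shows "a*(X^2 - Y^2) + 2*\<bar>X\<bar>*\<bar>Y\<bar>*\<bar>b\<bar> \<ge> 0"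
proof -
  have ta: "t*a \<ge> 0" using assms by simp
  have X0: "X > 0" using assms ta by linarith
  have "(t*a)^2 < X^2" using ta assms(3) by (simp add: power_strict_mono)
  then have "Y^2 < t^2 * b^2"
  proof -
    assume h: "(t*a)^2 < X^2"
    have "t^2 = t^2*a^2 + t^2*b^2" using assms(2) by (metis distrib_left mult.right_neutral)
    then show ?thesis using h assms(4) by (simp add: power_mult_distrib)
  qed
  then have h2: "\<bar>Y\<bar>^2 < (t*\<bar>b\<bar>)^2" by (simp add: power_mult_distrib)
  have tb: "0 \<le> t*\<bar>b\<bar>" using assms by simp
  have Yb: "\<bar>Y\<bar> \<le> t*\<bar>b\<bar>" using power2_less_imp_less[OF h2 tb] by simp
  have h3: "X*(\<bar>Y\<bar>*\<bar>Y\<bar>) \<le> X*(\<bar>Y\<bar>*(t*\<bar>b\<bar>))"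
    using Yb X0 by (intro mult_left_mono) (auto intro: mult_left_mono)
  have h4: "(t*a)*(Y*Y) \<le> X*(Y*Y)" using assms(3) by (intro mult_right_mono) auto
  have e1: "X*(\<bar>Y\<bar>*\<bar>Y\<bar>) = X*(Y*Y)" by (simp add: abs_mult_self_eq)
  have e2: "t*(a*(X^2 - Y^2) + 2*\<bar>X\<bar>*\<bar>Y\<bar>*\<bar>b\<bar>) = (t*a)*(X*X) - (t*a)*(Y*Y) + 2*(X*(\<bar>Y\<bar>*(t*\<bar>b\<bar>)))"
    using X0 by (simp add: algebra_simps power2_eq_square)
  have "(t*a)*(X*X) \<ge> 0" "(t*a)*(Y*Y) \<ge> 0" using ta by simp_all
  then have "t*(a*(X^2 - Y^2) + 2*\<bar>X\<bar>*\<bar>Y\<bar>*\<bar>b\<bar>) \<ge> 0"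
    using e1 e2 h3 h4 by linarith
  then show ?thesis using assms(5)
    by (simp add: zero_le_mult_iff)
qed

lemma sq_ineq:
  fixes X Y a b d :: real
  assumes "X*Y*a*b \<ge> 0" "a*(X^2 - Y^2) + 2*\<bar>X\<bar>*\<bar>Y\<bar>*\<bar>b\<bar> \<ge> 0" "a \<ge> 0" "a^2+b^2 = 1"
  shows "(X^2-Y^2-d^2*(a^2-b^2))^2 + (2*X*Y - 2*d^2*a*b)^2 \<le> (X^2-Y^2+d^2)^2 + (2*X*Y)^2"
proof -
  have b2: "b^2 = 1 - a^2" using assms(4) by simp
  have eq: "(X^2-Y^2+d^2)^2 + (2*X*Y)^2 - ((X^2-Y^2-d^2*(a^2-b^2))^2 + (2*X*Y - 2*d^2*a*b)^2)
      = 4*d^2*(a*(a*(X^2-Y^2) + 2*(X*Y*b)))"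
  proof -
    have "(X^2-Y^2+d^2)^2 + (2*X*Y)^2 - ((X^2-Y^2-d^2*(a^2-b^2))^2 + (2*X*Y - 2*d^2*a*b)^2)
      = 4*d^2*(a*(a*(X^2-Y^2) + 2*(X*Y*b))) + (1 - (a^2+b^2)) * (2*d^2*(X^2-Y^2) + d^4*(1 + a^2 + b^2))"
      by algebra
    then show ?thesis using assms(4) by simp
  qed
  have nn: "a*(a*(X^2-Y^2) + 2*(X*Y*b)) \<ge> 0"
  proof (cases "a = 0")
    case True then show ?thesis by simp
  next
    case False
    then have ap: "a > 0" using assms(3) by simp
    have "(X*Y*b)*a \<ge> 0" using assms(1) by (simp add: mult.commute mult.left_commute)
    then have "X*Y*b \<ge> 0" using ap by (simp add: zero_le_mult_iff)
    then have "X*Y*b = \<bar>X\<bar>*\<bar>Y\<bar>*\<bar>b\<bar>" by (metis abs_mult abs_of_nonneg)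
    then show ?thesis using ap assms(2) by simp
  qed
  have "4*d^2*(a*(a*(X^2-Y^2) + 2*(X*Y*b))) \<ge> 0" using nn by simp
  then show ?thesis using eq by linarith
qed

lemma cmod_sq_le:
  fixes z w :: complex
  assumes "Re z^2 + Im z^2 \<le> Re w^2 + Im w^2"
  shows "cmod z \<le> cmod w"
  using assms unfolding cmod_def by (rule real_sqrt_le_mono)

lemma core:
  fixes r d :: real and v P0 :: complex
  assumes r0: "r \<ge> 0" and d0: "d > 0" and rd: "r + d < 1" and v: "cmod v = d" and P0: "cmod P0 = 1"
  shows "\<exists>P. cmod P = 1 \<and> cmod ((P - of_real r)^2 - v^2) \<le> cmod ((P0 - of_real r)^2 + of_real (d^2))"
proof -
  define e where "e = (if Re v \<ge> 0 then v / of_real d else - v / of_real d)"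
  have e1: "cmod e = 1" using v d0 by (simp add: e_def norm_divide)
  have ea: "Re e \<ge> 0" using d0 by (simp add: e_def divide_nonpos_pos)
  have ev: "v^2 = (of_real d * e)^2" using d0 by (simp add: e_def power2_eq_square)
  define a where "a = Re e"
  define b where "b = Im e"
  have ab: "a^2 + b^2 = 1" using e1 unfolding a_def b_def by (metis cmod_power2 power_one)
  have a0: "a \<ge> 0" using ea a_def by simp
  have r1: "r < 1" using rd d0 by simp
  define s where "s = sqrt (r^2*a^2 + 1 - r^2)"
  have sarg: "r^2*a^2 + 1 - r^2 \<ge> 0"
  proof -
    have "r^2 \<le> 1" using r0 r1 by (simp add: power_le_one)
    then show ?thesis by (smt (verit) zero_le_mult_iff zero_le_power2)
  qed
  have s2: "s^2 = r^2*a^2 + 1 - r^2" using sarg by (simp add: s_def)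
  have s0: "s \<ge> r*a"
  proof -
    have "sqrt ((r*a)^2) \<le> s" unfolding s_def using sarg r0 r1
      by (intro real_sqrt_le_mono) (simp add: power_mult_distrib; smt (verit) power_le_one)
    then show ?thesis by simp
  qed
  define t where "t = s - r*a"
  have t0: "t \<ge> 0" using s0 t_def by simp
  have tq: "t^2 = 1 - r^2 - 2*r*a*t"
    unfolding t_def using s2 by (simp add: power2_eq_square algebra_simps)
  define Pc where "Pc = of_real r + of_real t * e"
  have RePc: "Re Pc = r + t*a" and ImPc: "Im Pc = t*b" by (simp_all add: Pc_def a_def b_def)
  have Pc1: "cmod Pc = 1"
  proof -
    have "(r + t*a)^2 + (t*b)^2 = r^2 + 2*r*a*t + t^2*(a^2+b^2)" by (simp add: power2_eq_square algebra_simps)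
    also have "\<dots> = 1" using ab tq by simp
    finally have "(Re Pc)^2 + (Im Pc)^2 = 1" using RePc ImPc by simp
    then show ?thesis unfolding cmod_def by simp
  qed
  have t1: "t \<ge> 1 - r"
  proof -
    have "cmod (Pc - of_real r) = t" using t0 e1 by (simp add: Pc_def norm_mult)
    moreover have "cmod Pc \<le> cmod (Pc - of_real r) + cmod (of_real r :: complex)"
      using norm_triangle_ineq2[of Pc "of_real r"] by simp
    ultimately show ?thesis using Pc1 r0 by simp
  qed
  define X where "X = Re P0 - r"
  define Y where "Y = Im P0"
  have P0sq: "(Re P0)^2 + (Im P0)^2 = 1" using P0 by (metis cmod_power2 power_one)
  have XY: "X^2 + Y^2 = 1 - 2*r*Re P0 + r^2"
    using P0sq unfolding X_def Y_def by (simp add: power2_eq_square algebra_simps)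
  have tt: "t^2 = 1 - 2*r*(r + t*a) + r^2" using tq by (simp add: algebra_simps power2_eq_square)
  have Z: "cmod (P0 - of_real r)^2 = X^2 + Y^2" unfolding X_def Y_def by (simp add: cmod_power2)
  show ?thesis
  proof (cases "Re P0 \<le> r + t*a")
    case True
    have "r*Re P0 \<le> r*(r+t*a)" using True r0 by (simp add: mult_left_mono)
    then have XYt: "X^2 + Y^2 \<ge> t^2" using XY tt by linarith
    have "(Pc - of_real r)^2 - v^2 = of_real (t^2 - d^2) * e^2"
      unfolding ev Pc_def by (simp add: power2_eq_square algebra_simps)
    then have L: "cmod ((Pc - of_real r)^2 - v^2) = \<bar>t^2 - d^2\<bar>"
      using e1 by (simp add: norm_mult norm_power del: of_real_diff of_real_power)
    have "d \<le> t" using t1 rd by simp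
    then have "d^2 \<le> t^2" using d0 by (simp add: power_mono)
    then have L2: "cmod ((Pc - of_real r)^2 - v^2) = t^2 - d^2" using L by simp
    have "cmod ((P0 - of_real r)^2) \<le> cmod ((P0 - of_real r)^2 + of_real (d^2)) + cmod (of_real (d^2) :: complex)"
      using norm_triangle_ineq2[of "(P0 - of_real r)^2" "-of_real (d^2)"] by simp
    then have "X^2 + Y^2 - d^2 \<le> cmod ((P0 - of_real r)^2 + of_real (d^2))"
      using Z by (simp add: norm_power)
    then show ?thesis using Pc1 L2 XYt by (intro exI[of _ Pc]) simp
  next
    case False
    then have Xt: "X > t*a" unfolding X_def by simp
    have "r*(r+t*a) \<le> r*Re P0" using False r0 by (simp add: mult_left_mono)
    then have XYt: "X^2 + Y^2 \<le> t^2" using XY tt by linarith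
    have tpos: "t > 0" using t1 rd d0 by simp
    have K: "a*(X^2 - Y^2) + 2*\<bar>X\<bar>*\<bar>Y\<bar>*\<bar>b\<bar> \<ge> 0"
      using key_ineq[OF a0 ab Xt XYt tpos] .
    define P where "P = (if X*Y*a*b \<ge> 0 then P0 else cnj P0)"
    define Y' where "Y' = Im P"
    have ReP: "Re P - r = X" unfolding P_def X_def by simp
    have Y'sq: "Y'^2 = Y^2" and aY': "\<bar>Y'\<bar> = \<bar>Y\<bar>" unfolding Y'_def P_def Y_def by simp_all
    have sgn: "X*Y'*a*b \<ge> 0" unfolding Y'_def P_def Y_def by auto
    have K': "a*(X^2 - Y'^2) + 2*\<bar>X\<bar>*\<bar>Y'\<bar>*\<bar>b\<bar> \<ge> 0" using K Y'sq aY' by simp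
    have P1: "cmod P = 1" using P0 by (simp add: P_def)
    have "Re ((P - of_real r)^2 - v^2)^2 + Im ((P - of_real r)^2 - v^2)^2
        = (X^2-Y'^2-d^2*(a^2-b^2))^2 + (2*X*Y' - 2*d^2*a*b)^2"
      unfolding ev using ReP by (simp add: power2_eq_square algebra_simps a_def b_def Y'_def)
    also have "\<dots> \<le> (X^2-Y'^2+d^2)^2 + (2*X*Y')^2" using sq_ineq[OF sgn K' a0 ab] .
    also have "\<dots> = (X^2-Y^2+d^2)^2 + (2*X*Y)^2" using Y'sq by (simp add: power_mult_distrib)
    also have "\<dots> = Re ((P0 - of_real r)^2 + of_real (d^2))^2 + Im ((P0 - of_real r)^2 + of_real (d^2))^2"
      unfolding X_def Y_def by (simp add: power2_eq_square algebra_simps)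
    finally show ?thesis using P1 by (intro exI[of _ P] conjI cmod_sq_le) auto
  qed
qed

definition Qf :: "complex \<Rightarrow> complex \<Rightarrow> complex \<Rightarrow> real" where
  "Qf a b p = cmod (a - b) / sqrt (cmod (a - p) * cmod (b - p))"

lemma prod_form:
  fixes m u p :: complex
  shows "cmod (m - u - p) * cmod (m + u - p) = cmod ((p - m)^2 - u^2)"
proof -
  have "(m - u - p) * (m + u - p) = (p - m)^2 - u^2" by (simp add: power2_eq_square algebra_simps)
  then show ?thesis by (metis norm_mult)
qed

lemma lowerL:
  fixes m u p :: complex and r d :: real
  assumes "cmod p = 1" "cmod m = r" "cmod u = d" "r + d < 1" "d \<ge> 0"
  shows "cmod (m - u - p) * cmod (m + u - p) \<ge> (1 - r)^2 - d^2"
proof -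
  have "cmod p - cmod m \<le> cmod (p - m)" by (rule norm_triangle_ineq2)
  then have "1 - r \<le> cmod (p - m)" using assms by simp
  moreover have "0 \<le> 1 - r" using assms by simp
  ultimately have sq: "(1-r)^2 \<le> cmod (p - m)^2" by (simp add: power_mono)
  have tri: "cmod ((p - m)^2) - cmod (u^2) \<le> cmod ((p - m)^2 - u^2)" by (rule norm_triangle_ineq2)
  have "cmod ((p - m)^2) - cmod (u^2) = cmod (p - m)^2 - d^2" using assms by (simp add: norm_power)
  then show ?thesis using sq tri prod_form[of m u p] by linarith
qed

lemma Qbound:
  fixes m u p :: complex and r d :: real
  assumes "cmod p = 1" "cmod m = r" "cmod u = d" "r + d < 1" "d > 0"
  shows "Qf (m - u) (m + u) p \<le> 2*d / sqrt ((1 - r)^2 - d^2)"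
proof -
  have L: "cmod (m - u - p) * cmod (m + u - p) \<ge> (1 - r)^2 - d^2"
    using lowerL[of p m r u d] assms by simp
  have Lp: "(1 - r)^2 - d^2 > 0"
  proof -
    have "d < 1 - r" "0 \<le> d" using assms by auto
    then have "d^2 < (1-r)^2" by (simp add: power_strict_mono)
    then show ?thesis by simp
  qed
  have num: "cmod ((m - u) - (m + u)) = 2*d"
  proof -
    have "(m - u) - (m + u) = - (2*u)" by simp
    then show ?thesis using assms by (simp add: norm_mult)
  qed
  have "sqrt ((1 - r)^2 - d^2) \<le> sqrt (cmod (m - u - p) * cmod (m + u - p))"
    using L by (rule real_sqrt_le_mono)
  moreover have "sqrt ((1 - r)^2 - d^2) > 0" using Lp by simp
  ultimately show ?thesis unfolding Qf_def num using assms(5)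
    by (intro divide_left_mono) auto
qed

lemma Qbdd:
  fixes m u :: complex and r d :: real
  assumes "cmod m = r" "cmod u = d" "r + d < 1" "d > 0"
  shows "bdd_above ((Qf (m - u) (m + u)) ` sphere 0 1)"
  using Qbound[OF _ assms] by (intro bdd_aboveI2[where M = "2*d / sqrt ((1 - r)^2 - d^2)"]) auto

lemma Qnonneg: "Qf a b p \<ge> 0" unfolding Qf_def by simp

lemma sic_Q: "sic_metric (ball 0 1) a b = ln (1 + (SUP p\<in>sphere 0 1. Qf a b p))"
  unfolding sic_metric_def Qf_def by simp

lemma ln_step:
  fixes S1 S2 :: real
  assumes "S1 \<ge> 0" "S1 \<le> S2"
  shows "ln (1 + S1) \<le> ln (1 + S2)"
  using assms by (subst ln_le_cancel_iff) auto

theorem lemma3p5: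
  fixes x y :: complex
  assumes "x \<in> ball 0 1" and "y \<in> ball 0 1"
  defines "\<xi> \<equiv> (if x + y \<noteq> 0 then (x + y) / of_real (cmod (x + y)) else 1)"
  defines "\<zeta> \<equiv> \<i> * \<xi>"
  defines "x' \<equiv> (x + y) / 2 - of_real (cmod (x - y) / 2) * \<xi>"
  defines "y' \<equiv> (x + y) / 2 + of_real (cmod (x - y) / 2) * \<xi>"
  defines "x'' \<equiv> (x + y) / 2 - of_real (cmod (x - y) / 2) * \<zeta>"
  defines "y'' \<equiv> (x + y) / 2 + of_real (cmod (x - y) / 2) * \<zeta>"
  assumes "x' \<in> ball 0 1" and "y' \<in> ball 0 1"
  shows "x'' \<in> ball 0 1 \<and> y'' \<in> ball 0 1 \<and>
         sic_metric (ball 0 1) x'' y'' \<le> sic_metric (ball 0 1) x y \<and>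
         sic_metric (ball 0 1) x y \<le> sic_metric (ball 0 1) x' y'"
proof -
  define m where "m = (x + y) / 2"
  define w where "w = (y - x) / 2"
  define d where "d = cmod (x - y) / 2"
  define r where "r = cmod m"
  have hx: "x = m - w" and hy: "y = m + w" by (simp_all add: m_def w_def field_simps)
  have wd: "cmod w = d" unfolding w_def d_def by (simp add: norm_minus_commute norm_divide)
  have d0: "d \<ge> 0" unfolding d_def by simp
  have r0: "r \<ge> 0" unfolding r_def by simp
  have xi1: "cmod \<xi> = 1" unfolding \<xi>_def by (simp add: norm_divide)
  have mr: "m = of_real r * \<xi>"
  proof (cases "x + y = 0")
    case True then show ?thesis by (simp add: m_def r_def)
  next
    case False
    then show ?thesis unfolding \<xi>_def r_def m_def by (simp add: norm_divide)
  qed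
  have x'e: "x' = m - of_real d * \<xi>" unfolding x'_def m_def d_def by simp
  have y'e: "y' = m + of_real d * \<xi>" unfolding y'_def m_def d_def by simp
  have x''e: "x'' = m - of_real d * (\<i> * \<xi>)" unfolding x''_def m_def d_def \<zeta>_def by simp
  have y''e: "y'' = m + of_real d * (\<i> * \<xi>)" unfolding y''_def m_def d_def \<zeta>_def by simp
  have "y' = of_real (r + d) * \<xi>" unfolding y'e mr by (simp add: algebra_simps)
  then have "cmod y' = r + d" using xi1 r0 d0 by (simp add: norm_mult del: of_real_add)
  then have rd: "r + d < 1" using \<open>y' \<in> ball 0 1\<close> by simp
  have sq: "sqrt (r^2 + d^2) < 1"
  proof -
    have "sqrt (r^2 + d^2) \<le> sqrt ((r+d)^2)" using r0 d0
      by (intro real_sqrt_le_mono) (simp add: power2_sum)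
    moreover have "sqrt ((r+d)^2) = r + d" using r0 d0 by simp
    ultimately show ?thesis using rd by linarith
  qed
  have "x'' = (of_real r - \<i> * of_real d) * \<xi>" unfolding x''e mr by (simp add: algebra_simps)
  then have "cmod x'' = cmod (of_real r - \<i> * of_real d)" using xi1 by (simp add: norm_mult)
  also have "\<dots> = sqrt (r^2 + d^2)" by (simp add: cmod_def)
  finally have "cmod x'' = sqrt (r^2 + d^2)" .
  then have bx'': "x'' \<in> ball 0 1" using sq by simp
  have "y'' = (of_real r + \<i> * of_real d) * \<xi>" unfolding y''e mr by (simp add: algebra_simps)
  then have "cmod y'' = cmod (of_real r + \<i> * of_real d)" using xi1 by (simp add: norm_mult)
  also have "\<dots> = sqrt (r^2 + d^2)" by (simp add: cmod_def)
  finally have "cmod y'' = sqrt (r^2 + d^2)" .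
  then have by'': "y'' \<in> ball 0 1" using sq by simp
  show ?thesis
  proof (cases "d = 0")
    case True
    then have "w = 0" using wd by simp
    then have "x = m" "y = m" "x' = m" "y' = m" "x'' = m" "y'' = m"
      using hx hy x'e y'e x''e y''e True by simp_all
    then show ?thesis using bx'' by simp
  next
    case False
    then have dp: "d > 0" using d0 by simp
    have mr': "cmod m = r" by (simp add: r_def)
    have dxi: "cmod (of_real d * \<xi>) = d" and dixi: "cmod (of_real d * (\<i> * \<xi>)) = d"
      using xi1 d0 by (simp_all add: norm_mult)
    have bdd: "bdd_above ((Qf x y) ` sphere 0 1)" "bdd_above ((Qf x' y') ` sphere 0 1)"
      "bdd_above ((Qf x'' y'') ` sphere 0 1)"
      using Qbdd[OF mr' wd rd dp] Qbdd[OF mr' dxi rd dp] Qbdd[OF mr' dixi rd dp]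
      by (simp_all add: hx hy x'e y'e x''e y''e)
    have ne: "sphere (0::complex) 1 \<noteq> {}" by simp
    have Sge: "(SUP p\<in>sphere 0 1. Qf a b p) \<ge> 0" if "bdd_above ((Qf a b) ` sphere 0 1)" for a b
    proof -
      have "(1::complex) \<in> sphere 0 1" by simp
      then have "Qf a b 1 \<le> (SUP p\<in>sphere 0 1. Qf a b p)" using that by (rule cSUP_upper)
      then show ?thesis using Qnonneg[of a b 1] by linarith
    qed
    have I1: "(SUP p\<in>sphere 0 1. Qf x y p) \<le> (SUP p\<in>sphere 0 1. Qf x' y' p)"
    proof (rule cSUP_least[OF ne])
      fix p :: complex assume p: "p \<in> sphere 0 1"
      have "Qf x y p \<le> 2*d / sqrt ((1 - r)^2 - d^2)"
        using Qbound[of p m r w d] p mr' wd rd dp hx hy by simp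
      also have "\<dots> = Qf x' y' \<xi>"
      proof -
        have a1: "x' - \<xi> = - (of_real (1 - r + d) * \<xi>)" unfolding x'e mr by (simp add: algebra_simps)
        have a2: "y' - \<xi> = - (of_real (1 - r - d) * \<xi>)" unfolding y'e mr by (simp add: algebra_simps)
        have a3: "x' - y' = - (of_real (2*d) * \<xi>)" unfolding x'e y'e by (simp add: algebra_simps)
        have "cmod (x' - \<xi>) * cmod (y' - \<xi>) = (1 - r + d) * (1 - r - d)"
          unfolding a1 a2 norm_minus_cancel norm_mult norm_of_real using xi1 rd d0 by simp
        also have "\<dots> = (1 - r)^2 - d^2" by (simp add: power2_eq_square algebra_simps)
        finally show ?thesis unfolding Qf_def a3 using xi1 d0 by (simp add: norm_mult)
      qed
      also have "\<dots> \<le> (SUP p\<in>sphere 0 1. Qf x' y' p)"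
        using bdd(2) xi1 by (intro cSUP_upper) auto
      finally show "Qf x y p \<le> (SUP p\<in>sphere 0 1. Qf x' y' p)" .
    qed
    have xc: "\<xi> * cnj \<xi> = 1" using xi1 by (metis complex_norm_square mult.commute of_real_1 power_one)
    have I2: "(SUP p\<in>sphere 0 1. Qf x'' y'' p) \<le> (SUP p\<in>sphere 0 1. Qf x y p)"
    proof (rule cSUP_least[OF ne])
      fix p0 :: complex assume p0: "p0 \<in> sphere 0 1"
      define P0 where "P0 = p0 * cnj \<xi>"
      have P01: "cmod P0 = 1" using p0 xi1 by (simp add: P0_def norm_mult)
      have vd: "cmod (w * cnj \<xi>) = d" using wd xi1 by (simp add: norm_mult)
      obtain P where P1: "cmod P = 1" and
        Pb: "cmod ((P - of_real r)^2 - (w * cnj \<xi>)^2) \<le> cmod ((P0 - of_real r)^2 + of_real (d^2))"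
        using core[OF r0 dp rd vd P01] by blast
      define p where "p = P * \<xi>"
      have p1: "p \<in> sphere 0 1" using P1 xi1 by (simp add: p_def norm_mult)
      have p0e: "p0 = P0 * \<xi>" unfolding P0_def using xc by (simp add: algebra_simps)
      have e1: "cmod (x - p) * cmod (y - p) = cmod ((P - of_real r)^2 - (w * cnj \<xi>)^2)"
      proof -
        have "(p - m)^2 - w^2 = \<xi>^2 * ((P - of_real r)^2 - (w * cnj \<xi>)^2)"
        proof -
          have "\<xi>^2 * (w * cnj \<xi>)^2 = w^2 * (\<xi> * cnj \<xi>)^2" by (simp add: power2_eq_square algebra_simps)
          then have "\<xi>^2 * (w * cnj \<xi>)^2 = w^2" using xc by simp
          moreover have "(p - m)^2 = \<xi>^2 * (P - of_real r)^2" unfolding p_def mr by (simp add: power2_eq_square algebra_simps)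
          ultimately show ?thesis by (simp add: algebra_simps)
        qed
        then show ?thesis using prod_form[of m w p] hx hy xi1 by (simp add: norm_mult norm_power)
      qed
      have e2: "cmod (x'' - p0) * cmod (y'' - p0) = cmod ((P0 - of_real r)^2 + of_real (d^2))"
      proof -
        have "(p0 - m)^2 - (of_real d * (\<i> * \<xi>))^2 = \<xi>^2 * ((P0 - of_real r)^2 + of_real (d^2))"
          unfolding p0e mr by (simp add: power2_eq_square algebra_simps)
        then show ?thesis using prod_form[of m "of_real d * (\<i> * \<xi>)" p0] x''e y''e xi1
          by (simp add: norm_mult norm_power)
      qed
      have Lx: "cmod (x - p) * cmod (y - p) \<ge> (1 - r)^2 - d^2"
        using lowerL[of p m r w d] p1 mr' wd rd d0 hx hy by simp
      have Lp: "(1 - r)^2 - d^2 > 0"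
      proof -
        have "d < 1 - r" using rd by simp
        then have "d^2 < (1-r)^2" using d0 by (simp add: power_strict_mono)
        then show ?thesis by simp
      qed
      have num: "cmod (x'' - y'') = cmod (x - y)"
      proof -
        have "x'' - y'' = - (of_real (2*d) * (\<i> * \<xi>))" unfolding x''e y''e by (simp add: algebra_simps)
        then show ?thesis using xi1 d0 by (simp add: norm_mult d_def)
      qed
      have "Qf x'' y'' p0 \<le> Qf x y p"
      proof -
        have "sqrt (cmod (x - p) * cmod (y - p)) \<le> sqrt (cmod (x'' - p0) * cmod (y'' - p0))"
          using e1 e2 Pb by (simp add: real_sqrt_le_mono)
        moreover have "sqrt (cmod (x - p) * cmod (y - p)) > 0" using Lx Lp by simp
        ultimately show ?thesis unfolding Qf_def num by (intro divide_left_mono) auto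
      qed
      also have "\<dots> \<le> (SUP p\<in>sphere 0 1. Qf x y p)" using bdd(1) p1 by (intro cSUP_upper)
      finally show "Qf x'' y'' p0 \<le> (SUP p\<in>sphere 0 1. Qf x y p)" .
    qed
    show ?thesis unfolding sic_Q using bx'' by'' I1 I2 Sge bdd
      by (auto intro: ln_step)
  qed
qed

end
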